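(* Let $R$ be a ring with identity and let $a,b,c,y\in R$. Then: (i) If $c$ is regular (i.e. $c=czc$ for some $z\in R$), then $y$ is a left $(b,c)$-inverse of $a$ if and only if $y$ is a right annihilator $(b,c)$-inverse of $a$. (ii) If $b$ is regular (i.e. $b=bzb$ for some $z\in R$), then $y$ is a right $(b,c)$-inverse of $a$ if and only if $y$ is a left annihilator $(b,c)$-inverse of $a$.
   Context: For $x\in R$: $xR=\{xr:r\in R\}$, $Rx=\{rx:r\in R\}$, $x^\circ=\{r\in R: xr=0\}$, ${}^\circ x=\{r\in R: rx=0\}$. An element $y\in R$ is a left $(b,c)$-inverse of $a$ if $Ry\subseteq Rc$ and $yab=b$; a right $(b,c)$-inverse of $a$ if $yR\subseteq bR$ and $cay=c$; a right annihilator $(b,c)$-inverse of $a$ if $c^\circ\subseteq y^\circ$ and $yab=b$; a left annihilator $(b,c)$-inverse of $a$ if ${}^\circ b\subseteq {}^\circ y$ and $cay=c$. *)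

theory Defs
  imports Main
begin

definition left_bc_inverse :: "'a::ring_1 \<Rightarrow> 'a \<Rightarrow> 'a \<Rightarrow> 'a \<Rightarrow> bool" where
  "left_bc_inverse y a b c \<longleftrightarrow>
     {r * y | r. True} \<subseteq> {r * c | r. True} \<and> y * a * b = b"

definition right_bc_inverse :: "'a::ring_1 \<Rightarrow> 'a \<Rightarrow> 'a \<Rightarrow> 'a \<Rightarrow> bool" where
  "right_bc_inverse y a b c \<longleftrightarrow>
     {y * r | r. True} \<subseteq> {b * r | r. True} \<and> c * a * y = c"

definition right_annihilator_bc_inverse :: "'a::ring_1 \<Rightarrow> 'a \<Rightarrow> 'a \<Rightarrow> 'a \<Rightarrow> bool" where
  "right_annihilator_bc_inverse y a b c \<longleftrightarrow>
     {r. c * r = 0} \<subseteq> {r. y * r = 0} \<and> y * a * b = b"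

definition left_annihilator_bc_inverse :: "'a::ring_1 \<Rightarrow> 'a \<Rightarrow> 'a \<Rightarrow> 'a \<Rightarrow> bool" where
  "left_annihilator_bc_inverse y a b c \<longleftrightarrow>
     {r. r * b = 0} \<subseteq> {r. r * y = 0} \<and> c * a * y = c"

definition regular :: "'a::ring_1 \<Rightarrow> bool" where
  "regular c \<longleftrightarrow> (\<exists>z. c = c * z * c)"

end

theory Submission
  imports Defs
begin

lemma part1:
  fixes a b c y :: "'a::ring_1"
  assumes "regular c"
  shows "left_bc_inverse y a b c \<longleftrightarrow> right_annihilator_bc_inverse y a b c"
proof -
  obtain z where z: "c = c * z * c" using assms unfolding regular_def by blast
  have A: "{r * y | r. True} \<subseteq> {r * c | r. True} \<longleftrightarrow> {r. c * r = 0} \<subseteq> {r. y * r = 0}"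
  proof
    assume h: "{r * y | r. True} \<subseteq> {r * c | r. True}"
    have "y \<in> {r * c | r. True}" using h by (metis (mono_tags, lifting) mem_Collect_eq mult_1 subsetD)
    then obtain s where s: "y = s * c" by blast
    show "{r. c * r = 0} \<subseteq> {r. y * r = 0}" using s by (auto simp: mult.assoc)
  next
    assume h: "{r. c * r = 0} \<subseteq> {r. y * r = 0}"
    have "c * (1 - z * c) = c - c * z * c" by (simp add: right_diff_distrib mult.assoc)
    hence "c * (1 - z * c) = 0" using z by simp
    hence "y * (1 - z * c) = 0" using h by blast
    hence "y - y * z * c = 0" by (simp add: right_diff_distrib mult.assoc)
    hence y: "y = (y * z) * c" by simp
    show "{r * y | r. True} \<subseteq> {r * c | r. True}"
    proof
      fix x assume "x \<in> {r * y | r. True}"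
      then obtain r where "x = r * y" by blast
      hence "x = (r * y * z) * c" using y by (simp add: mult.assoc)
      thus "x \<in> {r * c | r. True}" by blast
    qed
  qed
  show ?thesis unfolding left_bc_inverse_def right_annihilator_bc_inverse_def using A by blast
qed

lemma part2:
  fixes a b c y :: "'a::ring_1"
  assumes "regular b"
  shows "right_bc_inverse y a b c \<longleftrightarrow> left_annihilator_bc_inverse y a b c"
proof -
  obtain z where z: "b = b * z * b" using assms unfolding regular_def by blast
  have A: "{y * r | r. True} \<subseteq> {b * r | r. True} \<longleftrightarrow> {r. r * b = 0} \<subseteq> {r. r * y = 0}"
  proof
    assume h: "{y * r | r. True} \<subseteq> {b * r | r. True}"
    have "y \<in> {b * r | r. True}" using h by (metis (mono_tags, lifting) mem_Collect_eq mult_1_right subsetD)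
    then obtain s where s: "y = b * s" by blast
    show "{r. r * b = 0} \<subseteq> {r. r * y = 0}" using s by (auto simp: mult.assoc[symmetric])
  next
    assume h: "{r. r * b = 0} \<subseteq> {r. r * y = 0}"
    have "(1 - b * z) * b = b - b * z * b" by (simp add: left_diff_distrib)
    hence "(1 - b * z) * b = 0" using z by simp
    hence "(1 - b * z) * y = 0" using h by blast
    hence "y - b * (z * y) = 0" by (simp add: left_diff_distrib mult.assoc)
    hence y: "y = b * (z * y)" by simp
    show "{y * r | r. True} \<subseteq> {b * r | r. True}"
    proof
      fix x assume "x \<in> {y * r | r. True}"
      then obtain r where "x = y * r" by blast
      hence "x = b * (z * y) * r" using y by simp
      hence "x = b * (z * y * r)" by (simp add: mult.assoc)
      thus "x \<in> {b * r | r. True}" by blast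
    qed
  qed
  show ?thesis unfolding right_bc_inverse_def left_annihilator_bc_inverse_def using A by blast
qed

theorem proposition2p5:
  fixes a b c y :: "'a::ring_1"
  shows "(regular c \<longrightarrow>
            (left_bc_inverse y a b c \<longleftrightarrow> right_annihilator_bc_inverse y a b c))
       \<and> (regular b \<longrightarrow>
            (right_bc_inverse y a b c \<longleftrightarrow> left_annihilator_bc_inverse y a b c))"
  using part1 part2 by blast

end
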